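(* Let $n\ge2$ and $1\le m\le n-1$ be integers and let $\alpha$ be real with $m<\alpha<m(n-m)$. Then for primes $p$ there exists a subset $G\subset G(n,n-m)$ such that $|G|\approx p^{\alpha}$ and for every $\xi\in\mathbb{F}_p^n\setminus\{0\}$, \[ |\{W\in G:\ \xi\in W\}|\lesssim |G|\,p^{-m}. \]
   Context: $\mathbb{F}_p$ is the field with $p$ elements and $G(n,k)$ is the set of all $k$-dimensional linear subspaces of $\mathbb{F}_p^n$. $|J|$ denotes cardinality. $f\lesssim g$ means $f\le Cg$ with $C$ independent of $p$ and $\xi$; $f\approx g$ means $f\lesssim g$ and $g\lesssim f$. *)

theory Defs
  imports Complex_Main "HOL-Computational_Algebra.Primes"
begin

text \<open>The field F_p is represented by the residues {0..<p} with arithmetic mod p.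
  A vector of F_p^n is a function nat => nat with entries < p at indices < n
  and value 0 at indices >= n.\<close>

definition Fpn :: "nat \<Rightarrow> nat \<Rightarrow> (nat \<Rightarrow> nat) set" where
  "Fpn p n = {x. (\<forall>i<n. x i < p) \<and> (\<forall>i\<ge>n. x i = 0)}"

definition zero_vec :: "nat \<Rightarrow> nat" where
  "zero_vec = (\<lambda>i. 0)"

definition lin_comb :: "nat \<Rightarrow> nat \<Rightarrow> nat \<Rightarrow> (nat \<Rightarrow> nat \<Rightarrow> nat) \<Rightarrow> (nat \<Rightarrow> nat) \<Rightarrow> (nat \<Rightarrow> nat)" where
  "lin_comb p n k b c = (\<lambda>i. if i < n then (\<Sum>j<k. c j * b j i) mod p else 0)"

definition lin_indep :: "nat \<Rightarrow> nat \<Rightarrow> nat \<Rightarrow> (nat \<Rightarrow> nat \<Rightarrow> nat) \<Rightarrow> bool" where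
  "lin_indep p n k b \<longleftrightarrow>
     (\<forall>c. (\<forall>j<k. c j < p) \<longrightarrow> lin_comb p n k b c = zero_vec \<longrightarrow> (\<forall>j<k. c j = 0))"

definition span_vecs :: "nat \<Rightarrow> nat \<Rightarrow> nat \<Rightarrow> (nat \<Rightarrow> nat \<Rightarrow> nat) \<Rightarrow> (nat \<Rightarrow> nat) set" where
  "span_vecs p n k b = {lin_comb p n k b c | c. \<forall>j<k. c j < p}"

definition Grassmannian :: "nat \<Rightarrow> nat \<Rightarrow> nat \<Rightarrow> (nat \<Rightarrow> nat) set set" where
  "Grassmannian p n k = {W. \<exists>b. (\<forall>j<k. b j \<in> Fpn p n) \<and> lin_indep p n k b \<and> W = span_vecs p n k b}"

end

theory Submission
  imports Defs "HOL-Computational_Algebra.Polynomial"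
begin



definition box :: "nat \<Rightarrow> (nat \<Rightarrow> nat set) \<Rightarrow> (nat \<Rightarrow> nat) set" where
  "box m R = {t. (\<forall>i<m. t i \<in> R i) \<and> (\<forall>i\<ge>m. t i = 0)}"

lemma box_Suc: "box (Suc m) R = (\<lambda>(t,s). t(m:=s)) ` (box m R \<times> R m)"
proof (rule set_eqI, rule iffI)
  fix x assume x: "x \<in> box (Suc m) R"
  have "x = (\<lambda>(t,s). t(m:=s)) (x(m:=0), x m)" by simp
  moreover have "(x(m:=0), x m) \<in> box m R \<times> R m" using x by (auto simp: box_def)
  ultimately show "x \<in> (\<lambda>(t,s). t(m:=s)) ` (box m R \<times> R m)" by blast
next
  fix x assume "x \<in> (\<lambda>(t,s). t(m:=s)) ` (box m R \<times> R m)"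
  then show "x \<in> box (Suc m) R" by (auto simp: box_def less_Suc_eq)
qed

lemma box_inj: "inj_on (\<lambda>(t,s). t(m:=s)) (box m R \<times> R m)"
proof (rule inj_onI, clarsimp)
  fix a b a' b' assume "a \<in> box m R" "a' \<in> box m R" and e: "a(m := b) = a'(m := b')"
  then have "a m = 0" "a' m = 0" by (auto simp: box_def)
  moreover have "b = b'" using fun_cong[OF e, of m] by simp
  moreover have "\<forall>i. i \<noteq> m \<longrightarrow> a i = a' i" using e by (metis fun_upd_other)
  ultimately show "a = a' \<and> b = b'" by (metis ext)
qed

lemma box_card: "(\<And>i. i < m \<Longrightarrow> finite (R i)) \<Longrightarrow> finite (box m R) \<and> card (box m R) = (\<Prod>i<m. card (R i))"
proof (induction m)
  case 0
  have "box 0 R = {\<lambda>i. 0}" by (auto simp: box_def)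
  then show ?case by simp
next
  case (Suc m)
  then have IH: "finite (box m R)" "card (box m R) = (\<Prod>i<m. card (R i))" by auto
  have f: "finite (R m)" using Suc.prems by auto
  show ?case unfolding box_Suc using IH f box_inj[of m R]
    by (simp add: card_image card_cartesian_product)
qed

lemma Fpn_box: "Fpn p n = box n (\<lambda>_. {..<p})"
  by (auto simp: Fpn_def box_def)

lemma Fpn_card: "finite (Fpn p n) \<and> card (Fpn p n) = p ^ n"
  using box_card[of n "\<lambda>_. {..<p}"] by (simp add: Fpn_box)

lemma roots_bound:
  fixes P :: "int poly"
  assumes "prime p" "\<exists>i. \<not> int p dvd coeff P i"
  shows "card {s\<in>{..<p}. int p dvd poly P (int s)} \<le> degree P"
  using assms(2)
proof (induction "degree P" arbitrary: P rule: less_induct)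
  case less
  show ?case
  proof (cases "int p dvd lead_coeff P")
    case True
    define P' where "P' = P - monom (lead_coeff P) (degree P)"
    have c: "coeff P' i = (if i = degree P then 0 else coeff P i)" for i
      by (simp add: P'_def coeff_monom)
    obtain i where i: "\<not> int p dvd coeff P i" using less.prems by blast
    with True have "i \<noteq> degree P" by auto
    have ex: "\<exists>i. \<not> int p dvd coeff P' i" using i \<open>i \<noteq> degree P\<close> c by metis
    have dP: "degree P > 0"
    proof (rule ccontr)
      assume "\<not> degree P > 0"
      then have "degree P = 0" by simp
      then have "coeff P i = 0" using \<open>i \<noteq> degree P\<close> by (simp add: coeff_eq_0)
      with i show False by simp
    qed
    have "degree P' \<le> degree P" unfolding P'_def by (rule degree_diff_le) (auto intro: degree_monom_le)
    moreover have "degree P' \<noteq> degree P"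
    proof
      assume "degree P' = degree P"
      then have "P' \<noteq> 0" using dP by auto
      then have "coeff P' (degree P') \<noteq> 0" by simp
      with c \<open>degree P' = degree P\<close> show False by simp
    qed
    ultimately have lt: "degree P' < degree P" by simp
    have "poly P (int s) = poly P' (int s) + lead_coeff P * int s ^ degree P" for s
      by (simp add: P'_def poly_monom)
    then have "int p dvd poly P (int s) \<longleftrightarrow> int p dvd poly P' (int s)" for s
      using True by (metis dvd_add_left_iff dvd_mult2)
    then have "{s\<in>{..<p}. int p dvd poly P (int s)} = {s\<in>{..<p}. int p dvd poly P' (int s)}" by simp
    then show ?thesis using less.hyps[OF lt ex] lt by simp
  next
    case False
    show ?thesis
    proof (cases "{s\<in>{..<p}. int p dvd poly P (int s)} = {}")
      case True then show ?thesis by (simp only: True card.empty)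
    next
      case ne: False
      then obtain a where a: "a < p" "int p dvd poly P (int a)" by auto
      have dP: "degree P > 0"
      proof (rule ccontr)
        assume "\<not> degree P > 0"
        then have "degree P = 0" by simp
        then obtain c where "P = [:c:]" using degree0_coeffs by blast
        with a False show False by simp
      qed
      define Q where "Q = synthetic_div P (int a)"
      have PQ: "P = [:- int a, 1:] * Q + [:poly P (int a):]"
        unfolding Q_def by (rule synthetic_div_correct'[symmetric])
      have dQ: "degree Q = degree P - 1" unfolding Q_def by (simp add: degree_synthetic_div)
      have "lead_coeff Q = lead_coeff P"
      proof -
        have d1: "degree ([:- int a, 1:] * Q) = degree P"
        proof -
          have "Q \<noteq> 0" unfolding Q_def using dP by (simp add: synthetic_div_eq_0_iff)
          then have "degree ([:- int a, 1:] * Q) = 1 + degree Q" by (subst degree_mult_eq) auto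
          then show ?thesis using dQ dP by simp
        qed
        have "lead_coeff P = lead_coeff ([:- int a, 1:] * Q + [:poly P (int a):])" using PQ by simp
        also have "\<dots> = lead_coeff ([:- int a, 1:] * Q)"
        proof -
          have "degree [:poly P (int a):] < degree ([:- int a, 1:] * Q)" using d1 dP by simp
          from lead_coeff_add_le[OF this] show ?thesis by (simp only: add.commute)
        qed
        also have "\<dots> = lead_coeff Q" by (simp only: lead_coeff_mult) simp
        finally show ?thesis by simp
      qed
      then have exQ: "\<exists>i. \<not> int p dvd coeff Q i" using False by metis
      have ltQ: "degree Q < degree P" using dQ dP by simp
      have sub: "{s\<in>{..<p}. int p dvd poly P (int s)} \<subseteq> insert a {s\<in>{..<p}. int p dvd poly Q (int s)}"
      proof
        fix s assume s: "s \<in> {s\<in>{..<p}. int p dvd poly P (int s)}"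
        have "poly P (int s) = (int s - int a) * poly Q (int s) + poly P (int a)"
          by (subst PQ) (simp add: algebra_simps)
        then have "int p dvd (int s - int a) * poly Q (int s)" using s a
          by (metis (no_types, lifting) add_diff_cancel_right' dvd_diff mem_Collect_eq)
        moreover have "prime (int p)" using assms(1) by simp
        ultimately have "int p dvd (int s - int a) \<or> int p dvd poly Q (int s)"
          using prime_dvd_mult_iff by blast
        moreover have "int p dvd (int s - int a) \<Longrightarrow> s = a"
        proof -
          assume d: "int p dvd (int s - int a)"
          have "\<bar>int s - int a\<bar> < int p" using s a by auto
          show "s = a"
          proof (rule ccontr)
            assume "s \<noteq> a"
            then have "int s - int a \<noteq> 0" by simp
            from dvd_imp_le_int[OF this d] have "\<bar>int p\<bar> \<le> \<bar>int s - int a\<bar>" .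
            with \<open>\<bar>int s - int a\<bar> < int p\<close> show False by simp
          qed
        qed
        ultimately show "s \<in> insert a {s\<in>{..<p}. int p dvd poly Q (int s)}" using s by auto
      qed
      have "card {s\<in>{..<p}. int p dvd poly P (int s)} \<le> card (insert a {s\<in>{..<p}. int p dvd poly Q (int s)})"
        by (rule card_mono[OF _ sub]) simp
      also have "\<dots> \<le> Suc (card {s\<in>{..<p}. int p dvd poly Q (int s)})" by (simp add: card_insert_le_m1)
      also have "\<dots> \<le> Suc (degree Q)" using less.hyps[OF ltQ exQ] by simp
      finally show ?thesis using dQ dP by simp
    qed
  qed
qed



definition bvec :: "nat \<Rightarrow> (nat \<Rightarrow> nat \<Rightarrow> nat) \<Rightarrow> nat \<Rightarrow> nat \<Rightarrow> nat" where
  "bvec m A j = (\<lambda>i. if i < m then A i j else if i = m + j then 1 else 0)"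

definition Wsp :: "nat \<Rightarrow> nat \<Rightarrow> nat \<Rightarrow> (nat \<Rightarrow> nat \<Rightarrow> nat) \<Rightarrow> (nat \<Rightarrow> nat) set" where
  "Wsp p n m A = {x \<in> Fpn p n. \<forall>i<m. x i = (\<Sum>j<n-m. A i j * x (m+j)) mod p}"

lemma sum_bvec_hi:
  assumes "m \<le> i" "i < m + k"
  shows "(\<Sum>j<k. c j * bvec m A j i) = c (i - m)"
proof -
  have "(\<Sum>j<k. c j * bvec m A j i) = (\<Sum>j<k. if j = i - m then c j else 0)"
    using assms by (intro sum.cong) (auto simp: bvec_def)
  also have "\<dots> = c (i - m)" using assms by (simp add: sum.delta)
  finally show ?thesis .
qed

lemma sum_bvec_lo:
  assumes "i < m"
  shows "(\<Sum>j<k. c j * bvec m A j i) = (\<Sum>j<k. A i j * c j)"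
  using assms by (intro sum.cong) (auto simp: bvec_def)

lemma graph_grass:
  assumes p: "2 \<le> p" and mn: "m \<le> n" and A: "\<forall>i<m. \<forall>j<n-m. A i j < p"
  shows "Wsp p n m A \<in> Grassmannian p n (n - m)"
proof -
  let ?k = "n - m"
  let ?b = "bvec m A"
  have bF: "\<forall>j<?k. ?b j \<in> Fpn p n" using A p by (auto simp: Fpn_def bvec_def)
  have li: "lin_indep p n ?k ?b" unfolding lin_indep_def
  proof (intro allI impI)
    fix c j assume c: "\<forall>j<?k. c j < p" and z: "lin_comb p n ?k ?b c = zero_vec" and j: "j < ?k"
    have "lin_comb p n ?k ?b c (m + j) = 0" using z by (simp add: zero_vec_def)
    moreover have "lin_comb p n ?k ?b c (m + j) = c j mod p"
      using j mn sum_bvec_hi[where m=m and i="m+j" and k="?k" and c=c and A=A] by (simp add: lin_comb_def)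
    ultimately show "c j = 0" using c j by simp
  qed
  have sp: "span_vecs p n ?k ?b = Wsp p n m A"
  proof (rule set_eqI, rule iffI)
    fix x assume "x \<in> span_vecs p n ?k ?b"
    then obtain c where c: "\<forall>j<?k. c j < p" and x: "x = lin_comb p n ?k ?b c"
      by (auto simp: span_vecs_def)
    have hi: "x (m + j) = c j" if "j < ?k" for j
      using that mn c sum_bvec_hi[where m=m and i="m+j" and k="?k" and c=c and A=A] by (simp add: x lin_comb_def)
    have "x \<in> Fpn p n" using p by (auto simp: x lin_comb_def Fpn_def)
    moreover have "x i = (\<Sum>j<?k. A i j * x (m+j)) mod p" if "i < m" for i
    proof -
      have "x i = (\<Sum>j<?k. A i j * c j) mod p"
        using that mn sum_bvec_lo[where m=m and i=i and k="?k" and c=c and A=A] by (simp add: x lin_comb_def)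
      also have "\<dots> = (\<Sum>j<?k. A i j * x (m+j)) mod p" using hi by simp
      finally show ?thesis .
    qed
    ultimately show "x \<in> Wsp p n m A" by (simp add: Wsp_def)
  next
    fix x assume x: "x \<in> Wsp p n m A"
    define c where "c = (\<lambda>j. x (m + j))"
    have c: "\<forall>j<?k. c j < p" using x by (auto simp: c_def Wsp_def Fpn_def)
    have "lin_comb p n ?k ?b c = x"
    proof
      fix i
      show "lin_comb p n ?k ?b c i = x i"
      proof (cases "i < n")
        case False then show ?thesis using x by (simp add: lin_comb_def Wsp_def Fpn_def)
      next
        case True
        show ?thesis
        proof (cases "i < m")
          case True
          then show ?thesis using x sum_bvec_lo[where m=m and i=i and k="?k" and c=c and A=A] \<open>i < n\<close>
            by (simp add: lin_comb_def Wsp_def c_def)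
        next
          case False
          then have "(\<Sum>j<?k. c j * bvec m A j i) = c (i - m)" using \<open>i < n\<close> by (intro sum_bvec_hi) auto
          moreover have "x i < p" using x \<open>i < n\<close> by (simp add: Wsp_def Fpn_def)
          ultimately show ?thesis using \<open>i < n\<close> False by (simp add: lin_comb_def c_def)
        qed
      qed
    qed
    then show "x \<in> span_vecs p n ?k ?b" using c by (auto simp: span_vecs_def)
  qed
  have "\<exists>b. (\<forall>j<?k. b j \<in> Fpn p n) \<and> lin_indep p n ?k b \<and> Wsp p n m A = span_vecs p n ?k b"
    using bF li sp by (intro exI[of _ ?b]) simp
  then show ?thesis unfolding Grassmannian_def by simp
qed

lemma bvec_in_Wsp:
  assumes p: "2 \<le> p" and mn: "m \<le> n" and A: "\<forall>i<m. \<forall>j<n-m. A i j < p" and j: "j < n - m"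
  shows "bvec m A j \<in> Wsp p n m A"
proof -
  have "bvec m A j \<in> Fpn p n" using A p j by (auto simp: Fpn_def bvec_def)
  moreover have "bvec m A j i = (\<Sum>j'<n-m. A i j' * bvec m A j (m+j')) mod p" if "i < m" for i
  proof -
    have "(\<Sum>j'<n-m. A i j' * bvec m A j (m+j')) = (\<Sum>j'<n-m. if j' = j then A i j' else 0)"
      by (intro sum.cong) (auto simp: bvec_def)
    also have "\<dots> = A i j" using j by (simp add: sum.delta)
    finally show ?thesis using that A j by (simp add: bvec_def)
  qed
  ultimately show ?thesis by (simp add: Wsp_def)
qed

lemma graph_inj:
  assumes p: "2 \<le> p" and mn: "m \<le> n" and A: "\<forall>i<m. \<forall>j<n-m. A i j < p"
    and B: "\<forall>i<m. \<forall>j<n-m. B i j < p" and e: "Wsp p n m A = Wsp p n m B"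
    and i: "i < m" and j: "j < n - m"
  shows "A i j = B i j"
proof -
  have "bvec m A j \<in> Wsp p n m B" using bvec_in_Wsp[OF p mn A j] e by simp
  then have "bvec m A j i = (\<Sum>j'<n-m. B i j' * bvec m A j (m+j')) mod p" using i by (simp add: Wsp_def)
  also have "(\<Sum>j'<n-m. B i j' * bvec m A j (m+j')) = (\<Sum>j'<n-m. if j' = j then B i j' else 0)"
    by (intro sum.cong) (auto simp: bvec_def)
  also have "\<dots> = B i j" using j by (simp add: sum.delta)
  finally show ?thesis using i j B by (simp add: bvec_def)
qed



definition wt :: "nat \<Rightarrow> (nat \<Rightarrow> nat) \<Rightarrow> nat \<Rightarrow> nat \<Rightarrow> nat" where
  "wt k w i j = (if j = 0 then 0 else w (i * (k - 1) + (j - 1)))"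

definition Amat :: "nat \<Rightarrow> nat \<Rightarrow> (nat \<Rightarrow> nat) \<Rightarrow> (nat \<Rightarrow> nat) \<Rightarrow> nat \<Rightarrow> nat \<Rightarrow> nat" where
  "Amat p k t w = (\<lambda>i j. (t i ^ Suc j + wt k w i j) mod p)"

lemma Amat_lt: "2 \<le> p \<Longrightarrow> Amat p k t w i j < p"
  by (simp add: Amat_def)

lemma mod_add_cancel_lt:
  fixes a w w' p :: nat
  assumes e: "(a + w) mod p = (a + w') mod p" and w: "w < p" "w' < p"
  shows "w = w'"
proof (rule ccontr)
  assume ne: "w \<noteq> w'"
  have "int ((a + w) mod p) = int ((a + w') mod p)" using e by simp
  then have "(int a + int w) mod int p = (int a + int w') mod int p" by (simp add: zmod_int)
  then have "int p dvd (int a + int w) - (int a + int w')" by (simp add: mod_eq_dvd_iff)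
  then have d: "int p dvd int w - int w'" by simp
  have "int w - int w' \<noteq> 0" using ne by simp
  from dvd_imp_le_int[OF this d] have "\<bar>int p\<bar> \<le> \<bar>int w - int w'\<bar>" .
  moreover have "\<bar>int w - int w'\<bar> < int p" using w by auto
  ultimately show False by simp
qed

lemma Amat_inj:
  assumes p: "2 \<le> p" and t: "t \<in> Fpn p m" "t' \<in> Fpn p m"
    and w: "w \<in> Fpn p (m * (k - 1))" "w' \<in> Fpn p (m * (k - 1))"
    and e: "\<forall>i<m. \<forall>j<k. Amat p k t w i j = Amat p k t' w' i j" and k: "1 \<le> k"
  shows "t = t' \<and> w = w'"
proof -
  have tt: "t i = t' i" for i
  proof (cases "i < m")
    case True
    then have "Amat p k t w i 0 = Amat p k t' w' i 0" using e k by auto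
    then show ?thesis using t True by (simp add: Amat_def wt_def Fpn_def)
  next
    case False then show ?thesis using t by (simp add: Fpn_def)
  qed
  have ww: "w l = w' l" for l
  proof (cases "l < m * (k - 1)")
    case True
    define i where "i = l div (k - 1)"
    define j where "j = l mod (k - 1) + 1"
    have k1: "k - 1 > 0" using True by (cases "k - 1 = 0") auto
    have i: "i < m" using True k1 by (simp add: i_def less_mult_imp_div_less)
    have j: "j < k" "j \<noteq> 0" using k1 unfolding j_def
      by (metis Suc_eq_plus1 add_gr_0 less_diff_conv mod_less_divisor zero_less_one) auto
    have l: "i * (k - 1) + (j - 1) = l" unfolding i_def j_def using div_mult_mod_eq[of l "k-1"] by simp
    have "Amat p k t w i j = Amat p k t' w' i j" using e i j(1) by blast
    moreover have "wt k w i j = w l" "wt k w' i j = w' l" using j(2) l by (metis wt_def)+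
    ultimately have "(t i ^ Suc j + w l) mod p = (t i ^ Suc j + w' l) mod p"
      using tt by (simp add: Amat_def)
    moreover have "w l < p" "w' l < p" using w True by (auto simp: Fpn_def)
    ultimately show ?thesis by (rule mod_add_cancel_lt)
  next
    case False then show ?thesis using w by (simp add: Fpn_def)
  qed
  show ?thesis using tt ww by auto
qed

lemma mod_to_dvd:
  fixes a v :: "nat \<Rightarrow> nat"
  assumes "x = (\<Sum>j<k. (a j mod p) * v j) mod p"
  shows "int p dvd (\<Sum>j<k. int (a j) * int (v j)) - int x"
proof -
  have "(\<Sum>j<k. (a j mod p) * v j) mod p = (\<Sum>j<k. a j * v j) mod p"
  proof -
    have "(\<Sum>j<k. (a j mod p) * v j) mod p = (\<Sum>j<k. ((a j mod p) * v j) mod p) mod p"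
      by (simp add: mod_sum_eq)
    also have "\<dots> = (\<Sum>j<k. (a j * v j) mod p) mod p" by (simp add: mod_mult_left_eq)
    also have "\<dots> = (\<Sum>j<k. a j * v j) mod p" by (simp add: mod_sum_eq)
    finally show ?thesis .
  qed
  then have x: "x = (\<Sum>j<k. a j * v j) mod p" using assms by simp
  define Y where "Y = (\<Sum>j<k. a j * v j)"
  have "Y = p * (Y div p) + x" using x div_mult_mod_eq[of Y p] unfolding Y_def by (simp add: mult.commute)
  then have "int Y = int (p * (Y div p) + x)" by simp
  then have h1: "int Y = int p * int (Y div p) + int x" by simp
  have h2: "int Y = (\<Sum>j<k. int (a j) * int (v j))" by (simp add: Y_def)
  have "(\<Sum>j<k. int (a j) * int (v j)) - int x = int p * int (Y div p)" using h1 h2 by linarith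
  then show ?thesis by simp
qed

lemma count_bound:
  assumes p: "prime p" and mk: "n = m + k" and k: "1 \<le> k"
    and xi: "\<xi> \<in> Fpn p n - {zero_vec}"
  shows "card {t \<in> Fpn p m. \<xi> \<in> Wsp p n m (Amat p k t w)} \<le> k ^ m"
proof (cases "\<forall>j<k. \<xi> (m + j) = 0")
  case True
  have "{t \<in> Fpn p m. \<xi> \<in> Wsp p n m (Amat p k t w)} = {}"
  proof (rule ccontr)
    assume "{t \<in> Fpn p m. \<xi> \<in> Wsp p n m (Amat p k t w)} \<noteq> {}"
    then obtain t where "\<xi> \<in> Wsp p n m (Amat p k t w)" by auto
    then have lo: "\<forall>i<m. \<xi> i = (\<Sum>j<n-m. Amat p k t w i j * \<xi> (m+j)) mod p"
      by (simp add: Wsp_def)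
    have "\<xi> i = 0" for i
    proof -
      consider "i < m" | "m \<le> i" "i < n" | "n \<le> i" by linarith
      then show ?thesis
      proof cases
        case 1 then show ?thesis using lo True mk by simp
      next
        case 2
        then obtain j where "i = m + j" "j < k" using mk by (metis add_less_cancel_left le_Suc_ex)
        then show ?thesis using True by simp
      next
        case 3 then show ?thesis using xi by (simp add: Fpn_def)
      qed
    qed
    then show False using xi by (auto simp: zero_vec_def)
  qed
  then show ?thesis by (simp only: card.empty)
next
  case False
  then obtain j0 where j0: "j0 < k" "\<xi> (m + j0) \<noteq> 0" by auto
  have p2: "2 \<le> p" using p by (simp add: prime_ge_2_nat)
  have xlt: "\<xi> i < p" if "i < n" for i using xi that by (simp add: Fpn_def)
  define v where "v = (\<lambda>j. \<xi> (m + j))"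
  define P where "P = (\<lambda>i. (\<Sum>j<k. monom (int (v j)) (Suc j)) +
      [: (\<Sum>j<k. int (wt k w i j) * int (v j)) - int (\<xi> i) :])"
  define R where "R = (\<lambda>i. {s\<in>{..<p}. int p dvd poly (P i) (int s)})"
  have coefP: "coeff (P i) (Suc j0) = int (v j0)" for i
  proof -
    have "coeff (P i) (Suc j0) = (\<Sum>j<k. coeff (monom (int (v j)) (Suc j)) (Suc j0))"
      by (simp add: P_def coeff_sum)
    also have "\<dots> = (\<Sum>j<k. if j = j0 then int (v j) else 0)"
      by (intro sum.cong) (auto simp: coeff_monom)
    also have "\<dots> = int (v j0)" using j0 by (simp add: sum.delta)
    finally show ?thesis .
  qed
  have vlt: "v j0 < p" using xlt j0 mk by (simp add: v_def)
  have vnz: "v j0 \<noteq> 0" using j0 by (simp add: v_def)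
  have vnd: "\<not> int p dvd int (v j0)"
  proof
    assume "int p dvd int (v j0)"
    then have "p dvd v j0" by (simp only: int_dvd_int_iff)
    then have "p \<le> v j0" using vnz by (intro dvd_imp_le) auto
    with vlt show False by simp
  qed
  have degP: "degree (P i) \<le> k" for i
  proof -
    have "degree (\<Sum>j<k. monom (int (v j)) (Suc j)) \<le> k"
      by (rule degree_sum_le) (auto intro: order.trans[OF degree_monom_le])
    then show ?thesis unfolding P_def by (intro degree_add_le) auto
  qed
  have cardR: "card (R i) \<le> k" for i
  proof -
    have ex: "\<exists>j. \<not> int p dvd coeff (P i) j" using vnd by (intro exI[of _ "Suc j0"]) (simp add: coefP)
    have "card (R i) \<le> degree (P i)" unfolding R_def by (rule roots_bound[OF p ex])
    then show ?thesis using degP[of i] by (rule order.trans)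
  qed
  have finR: "finite (R i)" for i by (simp add: R_def)
  have sub: "{t \<in> Fpn p m. \<xi> \<in> Wsp p n m (Amat p k t w)} \<subseteq> box m R"
  proof
    fix t assume t: "t \<in> {t \<in> Fpn p m. \<xi> \<in> Wsp p n m (Amat p k t w)}"
    have "t i \<in> R i" if i: "i < m" for i
    proof -
      have eq: "\<xi> i = (\<Sum>j<k. ((t i ^ Suc j + wt k w i j) mod p) * v j) mod p"
        using t i mk by (simp add: Wsp_def Amat_def v_def)
      have "int p dvd (\<Sum>j<k. int (t i ^ Suc j + wt k w i j) * int (v j)) - int (\<xi> i)"
        by (rule mod_to_dvd[OF eq])
      moreover have "poly (P i) (int (t i)) = (\<Sum>j<k. int (t i ^ Suc j + wt k w i j) * int (v j)) - int (\<xi> i)"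
      proof -
        have "poly (P i) (int (t i)) = (\<Sum>j<k. int (v j) * int (t i) ^ Suc j) + (\<Sum>j<k. int (wt k w i j) * int (v j)) - int (\<xi> i)"
          by (simp add: P_def poly_sum poly_monom)
        also have "(\<Sum>j<k. int (v j) * int (t i) ^ Suc j) + (\<Sum>j<k. int (wt k w i j) * int (v j))
            = (\<Sum>j<k. int (t i ^ Suc j + wt k w i j) * int (v j))"
          unfolding sum.distrib[symmetric] by (intro sum.cong refl) (simp add: algebra_simps)
        finally show ?thesis .
      qed
      moreover have "t i < p" using t i by (simp add: Fpn_def)
      ultimately show ?thesis by (simp add: R_def)
    qed
    moreover have "\<forall>i\<ge>m. t i = 0" using t by (simp add: Fpn_def)
    ultimately show "t \<in> box m R" by (simp add: box_def)
  qed
  have "card {t \<in> Fpn p m. \<xi> \<in> Wsp p n m (Amat p k t w)} \<le> card (box m R)"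
    using box_card[of m R] finR by (intro card_mono[OF _ sub]) auto
  also have "\<dots> = (\<Prod>i<m. card (R i))" using box_card[of m R] finR by auto
  also have "\<dots> \<le> (\<Prod>i<m. k)" by (rule prod_mono) (simp add: cardR)
  finally show ?thesis by simp
qed



theorem corollary3p3:
  fixes n m :: nat and \<alpha> :: real
  assumes "n \<ge> 2" and "1 \<le> m" and "m \<le> n - 1"
    and "real m < \<alpha>" and "\<alpha> < real (m * (n - m))"
  shows "\<exists>C>0. \<forall>p::nat. prime p \<longrightarrow>
    (\<exists>G. G \<subseteq> Grassmannian p n (n - m) \<and>
         real (card G) \<le> C * real p powr \<alpha> \<and>
         real p powr \<alpha> \<le> C * real (card G) \<and>
         (\<forall>\<xi> \<in> Fpn p n - {zero_vec}.
            real (card {W \<in> G. \<xi> \<in> W}) \<le> C * real (card G) * real p powr (- real m)))"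
proof -
  define k where "k = n - m"
  have k1: "1 \<le> k" and nmk: "n = m + k" and mn: "m \<le> n" using assms by (auto simp: k_def)
  define C where "C = max 2 (real (k ^ m))"
  have C2: "2 \<le> C" and Ck: "real (k ^ m) \<le> C" by (auto simp: C_def)
  have "\<forall>p::nat. prime p \<longrightarrow>
    (\<exists>G. G \<subseteq> Grassmannian p n (n - m) \<and>
         real (card G) \<le> C * real p powr \<alpha> \<and>
         real p powr \<alpha> \<le> C * real (card G) \<and>
         (\<forall>\<xi> \<in> Fpn p n - {zero_vec}.
            real (card {W \<in> G. \<xi> \<in> W}) \<le> C * real (card G) * real p powr (- real m)))"
  proof (intro allI impI)
    fix p :: nat assume p: "prime p"
    have p2: "2 \<le> p" using p by (simp add: prime_ge_2_nat)
    have rp: "real p \<ge> 2" using p2 by simp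
    define x where "x = real p powr (\<alpha> - real m)"
    have x1: "1 \<le> x" unfolding x_def using rp assms(4) by (intro ge_one_powr_ge_zero) auto
    define N where "N = nat \<lceil>x\<rceil>"
    have Nx: "x \<le> real N" "real N \<le> x + 1" using x1 by (auto simp: N_def)
    have e1: "real (m * (k - 1)) = real m * real k - real m" using k1 by (simp add: of_nat_diff right_diff_distrib)
    have e2: "real (m * (n - m)) = real m * real k" by (simp add: k_def)
    have "\<alpha> - real m \<le> real (m * (k - 1))" using assms(5) e1 e2 by linarith
    then have "x \<le> real p powr (real (m * (k - 1)))" unfolding x_def using rp
      by (intro powr_mono) auto
    also have "\<dots> = real (p ^ (m * (k - 1)))"
    proof -
      have pp: "0 < real p" using rp by simp
      show ?thesis by (simp only: powr_realpow[OF pp] of_nat_power)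
    qed
    finally have "N \<le> p ^ (m * (k - 1))" unfolding N_def by (simp add: ceiling_le_iff nat_le_iff)
    then obtain Y where Y: "Y \<subseteq> Fpn p (m * (k - 1))" "card Y = N"
      using obtain_subset_with_card_n Fpn_card by metis
    have finY: "finite Y" using Y Fpn_card finite_subset by metis
    define D where "D = Fpn p m \<times> Y"
    define F where "F = (\<lambda>(t, w). Wsp p n m (Amat p k t w))"
    define G where "G = F ` D"
    have finD: "finite D" using finY Fpn_card by (simp add: D_def)
    have Alt: "\<forall>i<m. \<forall>j<n-m. Amat p k t w i j < p" for t w using p2 by (simp add: Amat_lt)
    have Gsub: "G \<subseteq> Grassmannian p n (n - m)"
      unfolding G_def F_def using graph_grass[OF p2 mn Alt] by auto
    have injF: "inj_on F D"
    proof (rule inj_onI)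
      fix a b assume a: "a \<in> D" and b: "b \<in> D" and e: "F a = F b"
      obtain t w where a': "a = (t, w)" by fastforce
      obtain t' w' where b': "b = (t', w')" by fastforce
      have eW: "Wsp p n m (Amat p k t w) = Wsp p n m (Amat p k t' w')" using e by (simp add: F_def a' b')
      have eA: "\<forall>i<m. \<forall>j<k. Amat p k t w i j = Amat p k t' w' i j"
      proof (intro allI impI)
        fix i j assume ij: "i < m" "j < k"
        then have "j < n - m" by (simp add: k_def)
        from graph_inj[OF p2 mn Alt Alt eW ij(1) this] show "Amat p k t w i j = Amat p k t' w' i j" .
      qed
      have m1: "t \<in> Fpn p m" "w \<in> Fpn p (m * (k - 1))" using a Y by (auto simp: D_def a')
      have m2: "t' \<in> Fpn p m" "w' \<in> Fpn p (m * (k - 1))" using b Y by (auto simp: D_def b')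
      from Amat_inj[OF p2 m1(1) m2(1) m1(2) m2(2) eA k1] show "a = b" by (simp add: a' b')
    qed
    have cardG: "card G = p ^ m * N"
      using card_image[OF injF] Fpn_card Y by (simp add: G_def D_def card_cartesian_product)
    have pm: "real p powr \<alpha> = real p ^ m * x"
      using rp by (simp add: x_def powr_diff powr_realpow)
    have pmpos: "real p ^ m > 0" using rp by simp
    have b1: "real (card G) \<le> C * real p powr \<alpha>"
    proof -
      have "real (card G) = real p ^ m * real N" by (simp add: cardG)
      also have "\<dots> \<le> real p ^ m * (2 * x)" using Nx x1 pmpos by (intro mult_left_mono) auto
      also have "\<dots> = 2 * real p powr \<alpha>" by (simp add: pm)
      also have "\<dots> \<le> C * real p powr \<alpha>" using C2 by (intro mult_right_mono) auto
      finally show ?thesis .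
    qed
    have b2: "real p powr \<alpha> \<le> C * real (card G)"
    proof -
      have "real p powr \<alpha> \<le> real p ^ m * real N" using Nx pmpos pm by (simp add: mult_left_mono)
      also have "\<dots> = real (card G)" by (simp add: cardG)
      also have "\<dots> \<le> C * real (card G)" using C2 by (simp add: mult_le_cancel_right1)
      finally show ?thesis .
    qed
    have b3: "real (card {W \<in> G. \<xi> \<in> W}) \<le> C * real (card G) * real p powr (- real m)"
      if xi: "\<xi> \<in> Fpn p n - {zero_vec}" for \<xi>
    proof -
      have "{W \<in> G. \<xi> \<in> W} = F ` {d \<in> D. \<xi> \<in> F d}" by (auto simp: G_def)
      then have "card {W \<in> G. \<xi> \<in> W} \<le> card {d \<in> D. \<xi> \<in> F d}" by (simp add: card_image_le finD)
      also have "{d \<in> D. \<xi> \<in> F d} = (\<Union>w\<in>Y. (\<lambda>t. (t, w)) ` {t \<in> Fpn p m. \<xi> \<in> Wsp p n m (Amat p k t w)})"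
        by (auto simp: D_def F_def)
      also have "card \<dots> \<le> (\<Sum>w\<in>Y. card ((\<lambda>t. (t, w)) ` {t \<in> Fpn p m. \<xi> \<in> Wsp p n m (Amat p k t w)}))"
        using finY by (rule card_UN_le)
      also have "\<dots> \<le> (\<Sum>w\<in>Y. k ^ m)"
      proof (rule sum_mono)
        fix w assume "w \<in> Y"
        have "card ((\<lambda>t. (t, w)) ` {t \<in> Fpn p m. \<xi> \<in> Wsp p n m (Amat p k t w)})
            \<le> card {t \<in> Fpn p m. \<xi> \<in> Wsp p n m (Amat p k t w)}" by (rule card_image_le) (simp add: Fpn_card)
        also have "\<dots> \<le> k ^ m" by (rule count_bound[OF p nmk k1 xi])
        finally show "card ((\<lambda>t. (t, w)) ` {t \<in> Fpn p m. \<xi> \<in> Wsp p n m (Amat p k t w)}) \<le> k ^ m" .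
      qed
      also have "\<dots> = N * k ^ m" using Y by simp
      finally have c: "real (card {W \<in> G. \<xi> \<in> W}) \<le> real N * real (k ^ m)"
        by (metis of_nat_le_iff of_nat_mult)
      have "real (card G) * real p powr (- real m) = real N"
        using rp pmpos by (simp add: cardG powr_minus powr_realpow field_simps)
      then have "C * real (card G) * real p powr (- real m) = C * real N" by simp
      moreover have "real N * real (k ^ m) \<le> C * real N" using mult_right_mono[OF Ck, of "real N"] by (simp add: mult.commute)
      ultimately show ?thesis using c by linarith
    qed
    show "\<exists>G. G \<subseteq> Grassmannian p n (n - m) \<and>
         real (card G) \<le> C * real p powr \<alpha> \<and>
         real p powr \<alpha> \<le> C * real (card G) \<and>
         (\<forall>\<xi> \<in> Fpn p n - {zero_vec}.
            real (card {W \<in> G. \<xi> \<in> W}) \<le> C * real (card G) * real p powr (- real m))"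
      using Gsub b1 b2 b3 by blast
  qed
  moreover have "C > 0" using C2 by simp
  ultimately show ?thesis by blast
qed

end
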